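(* Let $d\geq 3$ and let $P_d(t)=\sum_{n\geq 1}a_n t^n$, where $a_n$ is the number of directed plateau polyhypercubes of dimension $d$ (of any width $k\geq 1$) with lateral area $n$. Then $$P_d(t)=\frac{t^{d-1}(1-t)^{d-1}}{(1-t)^{2(d-1)}-t^{d-1}}.$$
   Context: Work in $\mathbb{Z}^d$ with orthonormal coordinate system $(0,\vec{i_1},\dots,\vec{i_d})$; a cell is a unit hypercube of the lattice. A polyhypercube of dimension $d$ is a finite union of cells, connected through their $(d-1)$-dimensional faces, defined up to translation. Its width is the number of distinct values of the $\vec{i_1}$-coordinate taken by its cells; its strata are its intersections with the layers of constant $\vec{i_1}$-coordinate. A plateau is a stratum that is a hyperrectangle. An elementary step is a positive move of one unit along one axis. A polyhypercube is directed if every cell can be reached from a distinguished root cell by a path of cells of the polyhypercube using only elementary steps. A directed plateau polyhypercube is a directed polyhypercube all of whose strata are plateaus. The lateral area of a polyhypercube is the sum, over $2\leq l\leq d$, of the areas (numbers of unit squares) of the polyominoes obtained by projecting it onto the planes $(\vec{i_1},\vec{i_l})$. Generating functions are formal power series in $t$. *)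

theory Defs
  imports "HOL-Computational_Algebra.Formal_Power_Series"
begin

text \<open>Cells of Z^d are represented as functions nat => int vanishing outside {0..<d}.
  Coordinate 0 plays the role of the first axis i_1; coordinate l (1 <= l < d)
  corresponds to i_{l+1}.\<close>

definition cells :: "nat \<Rightarrow> (nat \<Rightarrow> int) set" where
  "cells d = {x. \<forall>i. d \<le> i \<longrightarrow> x i = 0}"

definition unit_vec :: "nat \<Rightarrow> nat \<Rightarrow> int" where
  "unit_vec i = (\<lambda>j. if j = i then 1 else 0)"

definition step :: "nat \<Rightarrow> (nat \<Rightarrow> int) \<Rightarrow> (nat \<Rightarrow> int)" where
  "step i x = (\<lambda>j. x j + unit_vec i j)"

definition adjacent :: "nat \<Rightarrow> (nat \<Rightarrow> int) \<Rightarrow> (nat \<Rightarrow> int) \<Rightarrow> bool" where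
  "adjacent d x y \<longleftrightarrow> (\<exists>i<d. y = step i x \<or> x = step i y)"

definition polyhypercube :: "nat \<Rightarrow> (nat \<Rightarrow> int) set \<Rightarrow> bool" where
  "polyhypercube d P \<longleftrightarrow> finite P \<and> P \<noteq> {} \<and> P \<subseteq> cells d \<and>
     (\<forall>x\<in>P. \<forall>y\<in>P. (\<lambda>a b. a \<in> P \<and> b \<in> P \<and> adjacent d a b)\<^sup>*\<^sup>* x y)"

definition directed :: "nat \<Rightarrow> (nat \<Rightarrow> int) set \<Rightarrow> bool" where
  "directed d P \<longleftrightarrow> polyhypercube d P \<and>
     (\<exists>r\<in>P. \<forall>x\<in>P. (\<lambda>a b. a \<in> P \<and> b \<in> P \<and> (\<exists>i<d. b = step i a))\<^sup>*\<^sup>* r x)"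

definition stratum :: "(nat \<Rightarrow> int) set \<Rightarrow> int \<Rightarrow> (nat \<Rightarrow> int) set" where
  "stratum P c = {x \<in> P. x 0 = c}"

definition is_plateau :: "nat \<Rightarrow> int \<Rightarrow> (nat \<Rightarrow> int) set \<Rightarrow> bool" where
  "is_plateau d c S \<longleftrightarrow> (\<exists>a b :: nat \<Rightarrow> int.
     S = {x \<in> cells d. x 0 = c \<and> (\<forall>l. 1 \<le> l \<and> l < d \<longrightarrow> a l \<le> x l \<and> x l \<le> b l)})"

definition directed_plateau :: "nat \<Rightarrow> (nat \<Rightarrow> int) set \<Rightarrow> bool" where
  "directed_plateau d P \<longleftrightarrow> directed d P \<and>
     (\<forall>c \<in> (\<lambda>x. x 0) ` P. is_plateau d c (stratum P c))"

definition lateral_area :: "nat \<Rightarrow> (nat \<Rightarrow> int) set \<Rightarrow> nat" where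
  "lateral_area d P = (\<Sum>l\<in>{1..<d}. card ((\<lambda>x. (x 0, x l)) ` P))"

definition translate :: "(nat \<Rightarrow> int) \<Rightarrow> (nat \<Rightarrow> int) set \<Rightarrow> (nat \<Rightarrow> int) set" where
  "translate v P = (\<lambda>x. (\<lambda>j. x j + v j)) ` P"

definition trans_class :: "nat \<Rightarrow> (nat \<Rightarrow> int) set \<Rightarrow> (nat \<Rightarrow> int) set set" where
  "trans_class d P = {Q. \<exists>v\<in>cells d. Q = translate v P}"

definition dpp_count :: "nat \<Rightarrow> nat \<Rightarrow> nat" where
  "dpp_count d n = card (trans_class d ` {P. directed_plateau d P \<and> lateral_area d P = n})"

end

theory Submission
  imports Defs "HOL-Library.FuncSet"
begin
unbundle fps_syntax


definition cnt :: "'a set \<Rightarrow> ('a \<Rightarrow> nat) \<Rightarrow> nat \<Rightarrow> nat" where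
  "cnt A w n = card {a\<in>A. w a = n}"
definition ffib :: "'a set \<Rightarrow> ('a \<Rightarrow> nat) \<Rightarrow> bool" where
  "ffib A w \<longleftrightarrow> (\<forall>n. finite {a\<in>A. w a = n})"
definition gf :: "'a set \<Rightarrow> ('a \<Rightarrow> nat) \<Rightarrow> rat fps" where
  "gf A w = Abs_fps (\<lambda>n. of_nat (cnt A w n))"

lemma gf_nth: "gf A w $ n = of_nat (cnt A w n)"
  by (simp add: gf_def)

lemma bij_fib:
  assumes "bij_betw f A B" "\<And>a. a \<in> A \<Longrightarrow> wB (f a) = wA a"
  shows "bij_betw f {a\<in>A. wA a = n} {b\<in>B. wB b = n}"
proof -
  have "f ` {a\<in>A. wA a = n} = {b\<in>B. wB b = n}"
  proof
    show "f ` {a\<in>A. wA a = n} \<subseteq> {b\<in>B. wB b = n}"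
      using assms bij_betwE by fastforce
  next
    show "{b\<in>B. wB b = n} \<subseteq> f ` {a\<in>A. wA a = n}"
    proof
      fix b assume b: "b \<in> {b\<in>B. wB b = n}"
      then obtain a where "a \<in> A" "b = f a" using assms(1)
        by (metis (no_types, lifting) bij_betw_def imageE mem_Collect_eq)
      then show "b \<in> f ` {a\<in>A. wA a = n}" using b assms(2) by auto
    qed
  qed
  moreover have "inj_on f {a\<in>A. wA a = n}"
    using assms(1) by (metis (no_types, lifting) bij_betw_def inj_on_subset mem_Collect_eq subsetI)
  ultimately show ?thesis by (simp add: bij_betw_def)
qed

lemma bij_cnt:
  assumes "bij_betw f A B" "\<And>a. a \<in> A \<Longrightarrow> wB (f a) = wA a"
  shows "cnt A wA n = cnt B wB n"
  using bij_betw_same_card[OF bij_fib[of f A B wB wA n, OF assms]] by (simp add: cnt_def)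

lemma bij_gf:
  assumes "bij_betw f A B" "\<And>a. a \<in> A \<Longrightarrow> wB (f a) = wA a"
  shows "gf A wA = gf B wB"
  using bij_cnt[of f A B wB wA, OF assms] by (simp add: gf_def)

lemma bij_ffib:
  assumes "bij_betw f A B" "\<And>a. a \<in> A \<Longrightarrow> wB (f a) = wA a"
  shows "ffib A wA \<longleftrightarrow> ffib B wB"
proof -
  have "\<And>n. finite {a\<in>A. wA a = n} = finite {b\<in>B. wB b = n}"
    by (rule bij_betw_finite[OF bij_fib[of f A B wB wA, OF assms]])
  then show ?thesis by (simp add: ffib_def)
qed

lemma prod_fib_eq:
  fixes wa :: "'a \<Rightarrow> nat" and wb :: "'b \<Rightarrow> nat"
  shows "{p\<in>A\<times>B. wa (fst p) + wb (snd p) = n} =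
     (\<Union>i\<in>{0..n}. {a\<in>A. wa a = i} \<times> {b\<in>B. wb b = n - i})"
  by auto

lemma ffib_prod:
  assumes "ffib A wa" "ffib B wb"
  shows "ffib (A\<times>B) (\<lambda>p. wa (fst p) + wb (snd p))"
  unfolding ffib_def
proof
  fix n
  show "finite {p\<in>A\<times>B. wa (fst p) + wb (snd p) = n}"
    unfolding prod_fib_eq using assms unfolding ffib_def by auto
qed

lemma gf_prod:
  assumes "ffib A wa" "ffib B wb"
  shows "gf (A\<times>B) (\<lambda>p. wa (fst p) + wb (snd p)) = gf A wa * gf B wb"
proof (rule fps_ext)
  fix n
  have "card {p\<in>A\<times>B. wa (fst p) + wb (snd p) = n} =
        (\<Sum>i\<in>{0..n}. card ({a\<in>A. wa a = i} \<times> {b\<in>B. wb b = n - i}))"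
    unfolding prod_fib_eq
    by (rule card_UN_disjoint) (use assms in \<open>auto simp: ffib_def\<close>)
  also have "\<dots> = (\<Sum>i\<in>{0..n}. cnt A wa i * cnt B wb (n - i))"
    by (simp add: card_cartesian_product cnt_def)
  finally show "gf (A\<times>B) (\<lambda>p. wa (fst p) + wb (snd p)) $ n = (gf A wa * gf B wb) $ n"
    by (simp add: gf_nth fps_mult_nth cnt_def)
qed

definition Lists :: "nat \<Rightarrow> 'a set \<Rightarrow> 'a list set" where
  "Lists m A = {xs. length xs = m \<and> set xs \<subseteq> A}"
definition wl :: "('a \<Rightarrow> nat) \<Rightarrow> 'a list \<Rightarrow> nat" where
  "wl w xs = sum_list (map w xs)"

lemma Lists_Suc_bij:
  "bij_betw (\<lambda>p. fst p # snd p) (A \<times> Lists m A) (Lists (Suc m) A)"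
  by (rule bij_betw_byWitness[where f'="\<lambda>xs. (hd xs, tl xs)"])
     (auto simp: Lists_def length_Suc_conv)

lemma gf_Lists:
  assumes "ffib A w"
  shows "ffib (Lists m A) (wl w) \<and> gf (Lists m A) (wl w) = gf A w ^ m"
proof (induction m)
  case 0
  have L0: "Lists 0 A = {[]}" by (auto simp: Lists_def)
  have e: "\<And>n. {a\<in>{[]}. wl w a = n} = (if n = 0 then {[]} else {})"
    by (auto simp: wl_def)
  have "gf (Lists 0 A) (wl w) = 1"
    by (rule fps_ext) (simp only: L0 gf_nth cnt_def e, simp)
  moreover have "ffib (Lists 0 A) (wl w)" by (simp add: L0 ffib_def)
  ultimately show ?case by simp
next
  case (Suc m)
  have wt: "\<And>p. p \<in> A \<times> Lists m A \<Longrightarrow> wl w (fst p # snd p) = w (fst p) + wl w (snd p)"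
    by (simp add: wl_def)
  from bij_ffib[where wA="\<lambda>p. w (fst p) + wl w (snd p)" and wB="wl w", OF Lists_Suc_bij wt] ffib_prod[OF assms] Suc.IH
  have f: "ffib (Lists (Suc m) A) (wl w)" by blast
  have "gf (Lists (Suc m) A) (wl w) = gf (A \<times> Lists m A) (\<lambda>p. w (fst p) + wl w (snd p))"
    using bij_gf[where wA="\<lambda>p. w (fst p) + wl w (snd p)" and wB="wl w", OF Lists_Suc_bij wt] by simp
  also have "\<dots> = gf A w * gf (Lists m A) (wl w)"
    using gf_prod[OF assms] Suc.IH by blast
  finally show ?case using f Suc.IH by simp
qed



definition chain :: "(int \<times> int) list \<Rightarrow> bool" where
  "chain ps \<longleftrightarrow> (\<forall>i<length ps. fst (ps!i) \<le> snd (ps!i)) \<and>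
     (\<forall>i. Suc i < length ps \<longrightarrow> fst (ps!i) \<le> fst (ps!Suc i) \<and> fst (ps!Suc i) \<le> snd (ps!i))"
definition Prof :: "nat \<Rightarrow> (int \<times> int) list set" where
  "Prof k = {ps. length ps = k \<and> chain ps \<and> fst (hd ps) = 0}"
definition wp :: "(int \<times> int) list \<Rightarrow> nat" where
  "wp ps = sum_list (map (\<lambda>p. nat (snd p - fst p + 1)) ps)"
definition shiftp :: "int \<Rightarrow> (int \<times> int) list \<Rightarrow> (int \<times> int) list" where
  "shiftp a ps = map (\<lambda>p. (fst p + a, snd p + a)) ps"
definition Pairs :: "(int \<times> int) set" where
  "Pairs = {p. 0 \<le> snd p \<and> snd p \<le> fst p}"
definition wpair :: "int \<times> int \<Rightarrow> nat" where
  "wpair p = nat (fst p + 1)"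
definition Pos :: "int set" where "Pos = {b. 0 \<le> b}"
definition wpos :: "int \<Rightarrow> nat" where "wpos b = nat (b + 1)"

lemma chain_single: "chain [p] \<longleftrightarrow> fst p \<le> snd p"
  by (simp add: chain_def)

lemma chain_Cons2:
  "chain (p # q # r) \<longleftrightarrow> fst p \<le> snd p \<and> fst p \<le> fst q \<and> fst q \<le> snd p \<and> chain (q # r)"
proof -
  have A: "(\<forall>i<length (p # q # r). fst ((p # q # r)!i) \<le> snd ((p # q # r)!i)) \<longleftrightarrow>
        fst p \<le> snd p \<and> (\<forall>i<length (q # r). fst ((q # r)!i) \<le> snd ((q # r)!i))"
    by (simp only: length_Cons All_less_Suc2 nth_Cons_0 nth_Cons_Suc)
  have B: "(\<forall>i. Suc i < length (p # q # r) \<longrightarrow> fst ((p # q # r)!i) \<le> fst ((p # q # r)!Suc i) \<and> fst ((p # q # r)!Suc i) \<le> snd ((p # q # r)!i)) \<longleftrightarrow>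
        (fst p \<le> fst q \<and> fst q \<le> snd p) \<and> (\<forall>i. Suc i < length (q # r) \<longrightarrow> fst ((q # r)!i) \<le> fst ((q # r)!Suc i) \<and> fst ((q # r)!Suc i) \<le> snd ((q # r)!i))"
  proof
    assume h: "\<forall>i. Suc i < length (p # q # r) \<longrightarrow> fst ((p # q # r)!i) \<le> fst ((p # q # r)!Suc i) \<and> fst ((p # q # r)!Suc i) \<le> snd ((p # q # r)!i)"
    have "fst p \<le> fst q \<and> fst q \<le> snd p" using h[rule_format, of 0] by simp
    moreover have "\<forall>i. Suc i < length (q # r) \<longrightarrow> fst ((q # r)!i) \<le> fst ((q # r)!Suc i) \<and> fst ((q # r)!Suc i) \<le> snd ((q # r)!i)"
    proof (intro allI impI)
      fix i assume "Suc i < length (q # r)"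
      then show "fst ((q # r)!i) \<le> fst ((q # r)!Suc i) \<and> fst ((q # r)!Suc i) \<le> snd ((q # r)!i)"
        using h[rule_format, of "Suc i"] by simp
    qed
    ultimately show "(fst p \<le> fst q \<and> fst q \<le> snd p) \<and> (\<forall>i. Suc i < length (q # r) \<longrightarrow> fst ((q # r)!i) \<le> fst ((q # r)!Suc i) \<and> fst ((q # r)!Suc i) \<le> snd ((q # r)!i))"
      by blast
  next
    assume h: "(fst p \<le> fst q \<and> fst q \<le> snd p) \<and> (\<forall>i. Suc i < length (q # r) \<longrightarrow> fst ((q # r)!i) \<le> fst ((q # r)!Suc i) \<and> fst ((q # r)!Suc i) \<le> snd ((q # r)!i))"
    show "\<forall>i. Suc i < length (p # q # r) \<longrightarrow> fst ((p # q # r)!i) \<le> fst ((p # q # r)!Suc i) \<and> fst ((p # q # r)!Suc i) \<le> snd ((p # q # r)!i)"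
    proof (intro allI impI)
      fix i assume i: "Suc i < length (p # q # r)"
      show "fst ((p # q # r)!i) \<le> fst ((p # q # r)!Suc i) \<and> fst ((p # q # r)!Suc i) \<le> snd ((p # q # r)!i)"
      proof (cases i)
        case 0 then show ?thesis using h by simp
      next
        case (Suc j) then show ?thesis using h i by simp
      qed
    qed
  qed
  show ?thesis unfolding chain_def using A B by blast
qed

lemma chain_shift: "chain (shiftp a ps) \<longleftrightarrow> chain ps"
  by (simp add: chain_def shiftp_def)

lemma wp_shift: "wp (shiftp a ps) = wp ps"
  by (simp add: wp_def shiftp_def comp_def)

lemma shiftp_shiftp: "shiftp a (shiftp b ps) = shiftp (a + b) ps"
  by (simp add: shiftp_def comp_def algebra_simps)

lemma shiftp_0: "shiftp 0 ps = ps"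
  by (simp add: shiftp_def)

lemma Prof1_bij: "bij_betw (\<lambda>b. [(0, b)]) Pos (Prof 1)"
  by (rule bij_betw_byWitness[where f'="\<lambda>ps. snd (hd ps)"])
     (auto simp: Pos_def Prof_def chain_single length_Suc_conv)

lemma ProfSS_bij:
  "bij_betw (\<lambda>q. (0, fst (fst q)) # shiftp (snd (fst q)) (snd q))
     (Pairs \<times> Prof (Suc k)) (Prof (Suc (Suc k)))"
proof (rule bij_betw_byWitness[where f'="\<lambda>ps. ((snd (hd ps), fst (hd (tl ps))), shiftp (- fst (hd (tl ps))) (tl ps))"])
  show "\<forall>a\<in>Pairs \<times> Prof (Suc k).
       ((snd (hd ((0, fst (fst a)) # shiftp (snd (fst a)) (snd a))), fst (hd (tl ((0, fst (fst a)) # shiftp (snd (fst a)) (snd a))))),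
        shiftp (- fst (hd (tl ((0, fst (fst a)) # shiftp (snd (fst a)) (snd a))))) (tl ((0, fst (fst a)) # shiftp (snd (fst a)) (snd a)))) = a"
  proof
    fix a assume a: "a \<in> Pairs \<times> Prof (Suc k)"
    then obtain y ys where s: "snd a = y # ys" "fst y = 0"
      by (auto simp: Prof_def length_Suc_conv)
    show "((snd (hd ((0, fst (fst a)) # shiftp (snd (fst a)) (snd a))), fst (hd (tl ((0, fst (fst a)) # shiftp (snd (fst a)) (snd a))))),
        shiftp (- fst (hd (tl ((0, fst (fst a)) # shiftp (snd (fst a)) (snd a))))) (tl ((0, fst (fst a)) # shiftp (snd (fst a)) (snd a)))) = a"
      using s by (simp add: shiftp_shiftp shiftp_0) (simp add: shiftp_def prod_eq_iff)
  qed
next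
  show "\<forall>a'\<in>Prof (Suc (Suc k)).
       (0, fst (fst ((snd (hd a'), fst (hd (tl a'))), shiftp (- fst (hd (tl a'))) (tl a')))) #
       shiftp (snd (fst ((snd (hd a'), fst (hd (tl a'))), shiftp (- fst (hd (tl a'))) (tl a'))))
        (snd ((snd (hd a'), fst (hd (tl a'))), shiftp (- fst (hd (tl a'))) (tl a'))) = a'"
  proof
    fix ps assume "ps \<in> Prof (Suc (Suc k))"
    then obtain p q r where "ps = p # q # r" "fst p = 0"
      by (auto simp: Prof_def length_Suc_conv)
    then show "(0, fst (fst ((snd (hd ps), fst (hd (tl ps))), shiftp (- fst (hd (tl ps))) (tl ps)))) #
       shiftp (snd (fst ((snd (hd ps), fst (hd (tl ps))), shiftp (- fst (hd (tl ps))) (tl ps))))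
        (snd ((snd (hd ps), fst (hd (tl ps))), shiftp (- fst (hd (tl ps))) (tl ps))) = ps"
      by (simp add: shiftp_shiftp shiftp_0 prod_eq_iff)
  qed
next
  show "(\<lambda>q. (0, fst (fst q)) # shiftp (snd (fst q)) (snd q)) ` (Pairs \<times> Prof (Suc k)) \<subseteq> Prof (Suc (Suc k))"
  proof
    fix x assume "x \<in> (\<lambda>q. (0, fst (fst q)) # shiftp (snd (fst q)) (snd q)) ` (Pairs \<times> Prof (Suc k))"
    then obtain b a ys where x: "x = (0, b) # shiftp a ys" and ab: "0 \<le> a" "a \<le> b" and ys: "ys \<in> Prof (Suc k)"
      by (auto simp: Pairs_def)
    then obtain y yt where yy: "ys = y # yt" "fst y = 0" "chain ys" "length yt = k"
      by (auto simp: Prof_def length_Suc_conv)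
    have "shiftp a ys = (fst y + a, snd y + a) # shiftp a yt" using yy by (simp add: shiftp_def)
    moreover have "chain (shiftp a ys)" using yy chain_shift by blast
    ultimately show "x \<in> Prof (Suc (Suc k))"
      using x ab yy by (simp add: Prof_def chain_Cons2 shiftp_def)
  qed
next
  show "(\<lambda>ps. ((snd (hd ps), fst (hd (tl ps))), shiftp (- fst (hd (tl ps))) (tl ps))) ` Prof (Suc (Suc k)) \<subseteq> Pairs \<times> Prof (Suc k)"
  proof
    fix x assume "x \<in> (\<lambda>ps. ((snd (hd ps), fst (hd (tl ps))), shiftp (- fst (hd (tl ps))) (tl ps))) ` Prof (Suc (Suc k))"
    then obtain ps where x: "x = ((snd (hd ps), fst (hd (tl ps))), shiftp (- fst (hd (tl ps))) (tl ps))"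
      and ps: "ps \<in> Prof (Suc (Suc k))" by blast
    then obtain p q r where pq: "ps = p # q # r" "fst p = 0" "length r = k"
      by (auto simp: Prof_def length_Suc_conv)
    have c: "fst p \<le> snd p \<and> fst p \<le> fst q \<and> fst q \<le> snd p \<and> chain (q # r)"
      using ps pq by (simp add: Prof_def chain_Cons2)
    have "chain (shiftp (- fst q) (q # r))" using c chain_shift by blast
    then show "x \<in> Pairs \<times> Prof (Suc k)"
      using x pq c by (auto simp: Pairs_def Prof_def shiftp_def)
  qed
qed

lemma ProfSS_w:
  "q \<in> Pairs \<times> Prof (Suc k) \<Longrightarrow>
   wp ((0, fst (fst q)) # shiftp (snd (fst q)) (snd q)) = wpair (fst q) + wp (snd q)"
  using wp_shift[of "snd (fst q)" "snd q"] by (simp add: wp_def wpair_def)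

lemma Pos_fib: "{b\<in>Pos. wpos b = n} = (if n = 0 then {} else {int n - 1})"
  by (auto simp: Pos_def wpos_def)

lemma Pairs_fib: "{p\<in>Pairs. wpair p = n} = (\<lambda>a. (int n - 1, a)) ` {0..int n - 1}"
  by (auto simp: Pairs_def wpair_def image_iff)

lemma ffib_Pos: "ffib Pos wpos"
  by (simp add: ffib_def Pos_fib)

lemma ffib_Pairs: "ffib Pairs wpair"
  by (simp add: ffib_def Pairs_fib)

definition g1 :: "rat fps" where "g1 = Abs_fps (\<lambda>n. if n = 0 then 0 else 1)"
definition gP :: "rat fps" where "gP = Abs_fps (\<lambda>n. of_nat n)"

lemma gf_Pos: "gf Pos wpos = g1"
  by (rule fps_ext) (simp add: gf_nth cnt_def Pos_fib g1_def)

lemma gf_Pairs: "gf Pairs wpair = gP"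
proof (rule fps_ext)
  fix n
  have "card ((\<lambda>a. (int n - 1, a)) ` {0..int n - 1}) = n"
    by (subst card_image) (auto simp: inj_on_def)
  then show "gf Pairs wpair $ n = gP $ n"
    by (simp add: gf_nth cnt_def Pairs_fib gP_def)
qed

lemma times_1mX_nth: "(f * (1 - fps_X)) $ n = f $ n - (if n = 0 then 0 else f $ (n - 1))"
  for f :: "rat fps"
  by (simp add: algebra_simps mult.commute[of f])

lemma g1_eq: "g1 * (1 - fps_X) = fps_X"
  by (rule fps_ext, simp only: times_1mX_nth) (simp add: g1_def fps_X_def)

lemma gP_eq: "gP * (1 - fps_X) = g1"
  by (rule fps_ext, simp only: times_1mX_nth) (simp add: g1_def gP_def of_nat_diff)

lemma gf_Prof: "ffib (Prof (Suc k)) wp \<and> gf (Prof (Suc k)) wp = g1 * gP ^ k"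
proof (induction k)
  case 0
  have w: "\<And>b. b \<in> Pos \<Longrightarrow> wp [(0, b)] = wpos b" by (simp add: wp_def wpos_def)
  show ?case
    using bij_gf[where wA=wpos and wB=wp, OF Prof1_bij w] bij_ffib[where wA=wpos and wB=wp, OF Prof1_bij w]
      ffib_Pos gf_Pos by simp
next
  case (Suc k)
  have f: "ffib (Prof (Suc (Suc k))) wp"
    using bij_ffib[where wA="\<lambda>q. wpair (fst q) + wp (snd q)" and wB=wp, OF ProfSS_bij[of k] ProfSS_w[of _ k]]
      ffib_prod[OF ffib_Pairs] Suc.IH by blast
  have "gf (Prof (Suc (Suc k))) wp = gf (Pairs \<times> Prof (Suc k)) (\<lambda>q. wpair (fst q) + wp (snd q))"
    using bij_gf[where wA="\<lambda>q. wpair (fst q) + wp (snd q)" and wB=wp, OF ProfSS_bij[of k] ProfSS_w[of _ k]] by simp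
  also have "\<dots> = gP * (g1 * gP ^ k)"
    using gf_prod[OF ffib_Pairs] Suc.IH gf_Pairs by metis
  finally show ?case using f by (simp add: algebra_simps)
qed

lemma wp_ge_length: "chain ps \<Longrightarrow> length ps \<le> wp ps"
proof -
  assume c: "chain ps"
  have "\<forall>p\<in>set ps. 1 \<le> nat (snd p - fst p + 1)"
  proof
    fix p assume "p \<in> set ps"
    then obtain i where "i < length ps" "p = ps ! i" by (auto simp: in_set_conv_nth)
    then have "fst p \<le> snd p" using c by (simp add: chain_def)
    then show "1 \<le> nat (snd p - fst p + 1)" by simp
  qed
  then show ?thesis unfolding wp_def
    by (induction ps) auto
qed



lemma mult_agree:
  fixes f g h :: "rat fps"
  assumes "\<And>i. i \<le> n \<Longrightarrow> f $ i = g $ i"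
  shows "(h * f) $ n = (h * g) $ n"
  unfolding fps_mult_nth by (rule sum.cong) (use assms in auto)

lemma fps_final:
  fixes A B T :: "rat fps" and F :: "nat \<Rightarrow> rat fps" and m :: nat
  assumes m: "m \<ge> 1"
    and FA: "\<And>j. F (Suc j) = A * B ^ j"
    and Aeq: "A * (1 - fps_X) ^ m = fps_X ^ m"
    and Beq: "B * (1 - fps_X) ^ (2 * m) = fps_X ^ m"
    and F0: "\<And>i j. i \<le> j \<Longrightarrow> F (Suc j) $ i = 0"
    and T: "T = Abs_fps (\<lambda>n. \<Sum>j<n. F (Suc j) $ n)"
  shows "T = fps_X ^ m * (1 - fps_X) ^ m / ((1 - fps_X) ^ (2 * m) - fps_X ^ m)"
proof -
  define S where "S N = (\<Sum>j<N. A * B ^ j)" for N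
  define D where "D = (1 - fps_X) ^ (2 * m) - (fps_X :: rat fps) ^ m"
  have agree: "T $ i = S N $ i" if "i \<le> N" for i N
  proof -
    have "T $ i = (\<Sum>j<i. (A * B ^ j) $ i)" using T FA by simp
    also have "\<dots> = (\<Sum>j<N. (A * B ^ j) $ i)"
      by (rule sum.mono_neutral_left) (use that F0 FA in auto)
    also have "\<dots> = S N $ i" by (simp add: S_def fps_sum_nth)
    finally show ?thesis .
  qed
  have Ssuc: "S (Suc N) = A + B * S N" for N
    by (simp add: S_def sum.lessThan_Suc_shift sum_distrib_left algebra_simps del: sum.lessThan_Suc)
  have key: "S (Suc N) * (1 - fps_X) ^ (2 * m) = fps_X ^ m * (1 - fps_X) ^ m + fps_X ^ m * S N" for N
  proof -
    have p: "(1 - fps_X :: rat fps) ^ (2 * m) = (1 - fps_X) ^ m * (1 - fps_X) ^ m"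
      by (simp add: mult_2 power_add)
    have "S (Suc N) * (1 - fps_X) ^ (2 * m) = (A * (1 - fps_X) ^ m) * (1 - fps_X) ^ m + (B * (1 - fps_X) ^ (2 * m)) * S N"
      unfolding Ssuc p by (simp add: algebra_simps)
    then show ?thesis by (simp add: Aeq Beq)
  qed
  have TD: "T * D = fps_X ^ m * (1 - fps_X) ^ m"
  proof (rule fps_ext)
    fix n
    have "(T * D) $ n = (D * T) $ n" by (simp add: mult.commute)
    also have "\<dots> = (D * S (Suc n)) $ n" by (rule mult_agree, rule agree) simp
    also have "\<dots> = (S (Suc n) * (1 - fps_X) ^ (2 * m)) $ n - (fps_X ^ m * S (Suc n)) $ n"
      by (simp add: D_def algebra_simps)
    also have "\<dots> = (fps_X ^ m * (1 - fps_X) ^ m) $ n + (fps_X ^ m * S n) $ n - (fps_X ^ m * S (Suc n)) $ n"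
      by (simp add: key)
    also have "(fps_X ^ m * S n) $ n = (fps_X ^ m * T) $ n" by (rule mult_agree, rule sym, rule agree) simp
    also have "(fps_X ^ m * S (Suc n)) $ n = (fps_X ^ m * T) $ n" by (rule mult_agree, rule sym, rule agree) simp
    finally show "(T * D) $ n = (fps_X ^ m * (1 - fps_X) ^ m) $ n" by simp
  qed
  have "D $ 0 = 1" using m by (simp add: D_def fps_nth_power_0)
  then have "D \<noteq> 0" by auto
  then have "T = T * D / D" by simp
  also have "\<dots> = fps_X ^ m * (1 - fps_X) ^ m / D" by (simp only: TD)
  finally show ?thesis by (simp only: D_def)
qed



definition dstep :: "nat \<Rightarrow> (nat \<Rightarrow> int) set \<Rightarrow> (nat \<Rightarrow> int) \<Rightarrow> (nat \<Rightarrow> int) \<Rightarrow> bool" where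
  "dstep d P = (\<lambda>a b. a \<in> P \<and> b \<in> P \<and> (\<exists>i<d. b = step i a))"
definition adjr :: "nat \<Rightarrow> (nat \<Rightarrow> int) set \<Rightarrow> (nat \<Rightarrow> int) \<Rightarrow> (nat \<Rightarrow> int) \<Rightarrow> bool" where
  "adjr d P = (\<lambda>a b. a \<in> P \<and> b \<in> P \<and> adjacent d a b)"

lemma directed_iff:
  "directed d P \<longleftrightarrow> polyhypercube d P \<and> (\<exists>r\<in>P. \<forall>x\<in>P. (dstep d P)\<^sup>*\<^sup>* r x)"
  by (simp add: directed_def dstep_def)

lemma polyhypercube_iff:
  "polyhypercube d P \<longleftrightarrow> finite P \<and> P \<noteq> {} \<and> P \<subseteq> cells d \<and> (\<forall>x\<in>P. \<forall>y\<in>P. (adjr d P)\<^sup>*\<^sup>* x y)"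
  by (simp add: polyhypercube_def adjr_def)

lemma step_app: "step i a j = a j + (if j = i then 1 else 0)"
  by (simp add: step_def unit_vec_def)

lemma reach_ge:
  assumes "(dstep d P)\<^sup>*\<^sup>* r x"
  shows "r j \<le> x j"
  using assms
proof (induction rule: rtranclp_induct)
  case base then show ?case by simp
next
  case (step y z)
  then show ?case by (auto simp: dstep_def step_app)
qed

lemma reach_layer:
  assumes "(dstep d P)\<^sup>*\<^sup>* r x" "r \<in> P" "r 0 \<le> c" "c \<le> x 0"
  shows "\<exists>y\<in>P. y 0 = c"
  using assms
proof (induction arbitrary: c rule: rtranclp_induct)
  case base then show ?case by (intro bexI[of _ r]) auto
next
  case (step y z)
  show ?case
  proof (cases "c \<le> y 0")
    case True then show ?thesis using step by blast
  next
    case False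
    from step.hyps(2) obtain i where "z \<in> P" "i < d" "z = step i y" by (auto simp: dstep_def)
    then have "z 0 \<le> y 0 + 1" by (simp add: step_app)
    then have "z 0 = c" using False step.prems by simp
    then show ?thesis using \<open>z \<in> P\<close> by blast
  qed
qed

lemma adjr_sym: "adjr d P a b \<Longrightarrow> adjr d P b a"
  by (auto simp: adjr_def adjacent_def)

lemma dstep_adjr: "dstep d P a b \<Longrightarrow> adjr d P a b"
  by (auto simp: adjr_def adjacent_def dstep_def)

lemma adjr_rev: "(adjr d P)\<^sup>*\<^sup>* a b \<Longrightarrow> (adjr d P)\<^sup>*\<^sup>* b a"
proof (induction rule: rtranclp_induct)
  case base then show ?case by simp
next
  case (step y z)
  then show ?case using adjr_sym by (metis converse_rtranclp_into_rtranclp)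
qed

lemma directed_connected:
  assumes "\<forall>x\<in>P. (dstep d P)\<^sup>*\<^sup>* r x" "x \<in> P" "y \<in> P"
  shows "(adjr d P)\<^sup>*\<^sup>* x y"
proof -
  have m: "(dstep d P)\<^sup>*\<^sup>* a b \<Longrightarrow> (adjr d P)\<^sup>*\<^sup>* a b" for a b
    by (rule rtranclp_mono[THEN predicate2D, of "dstep d P" "adjr d P"]) (auto intro: dstep_adjr)
  have "(adjr d P)\<^sup>*\<^sup>* x r" using m assms adjr_rev by blast
  moreover have "(adjr d P)\<^sup>*\<^sup>* r y" using m assms by blast
  ultimately show ?thesis by (rule rtranclp_trans)
qed

lemma finite_bcells: "finite {x\<in>cells d. \<forall>j<d. a j \<le> x j \<and> x j \<le> b j}"
proof -
  let ?S = "{x\<in>cells d. \<forall>j<d. a j \<le> x j \<and> x j \<le> b j}"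
  have inj: "inj_on (\<lambda>x. restrict x {..<d}) ?S"
  proof (rule inj_onI)
    fix x y assume xy: "x \<in> ?S" "y \<in> ?S" "restrict x {..<d} = restrict y {..<d}"
    show "x = y"
    proof
      fix j show "x j = y j"
      proof (cases "j < d")
        case True then show ?thesis using xy(3) by (metis lessThan_iff restrict_apply')
      next
        case False then show ?thesis using xy(1,2) by (auto simp: cells_def)
      qed
    qed
  qed
  have "(\<lambda>x. restrict x {..<d}) ` ?S \<subseteq> (\<Pi>\<^sub>E j\<in>{..<d}. {a j..b j})" by (auto simp: PiE_def extensional_def Pi_def)
  moreover have "finite (\<Pi>\<^sub>E j\<in>{..<d}. {a j..b j})" by (rule finite_PiE) auto
  ultimately have "finite ((\<lambda>x. restrict x {..<d}) ` ?S)" by (rule finite_subset)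
  then show ?thesis using inj by (rule finite_imageD)
qed



definition Phi :: "nat \<Rightarrow> nat \<Rightarrow> (nat \<Rightarrow> nat \<Rightarrow> int) \<Rightarrow> (nat \<Rightarrow> nat \<Rightarrow> int) \<Rightarrow> (nat \<Rightarrow> int) set" where
  "Phi d k LO HI = {x\<in>cells d. 0 \<le> x 0 \<and> x 0 < int k \<and>
     (\<forall>l. 1 \<le> l \<and> l < d \<longrightarrow> LO (nat (x 0)) l \<le> x l \<and> x l \<le> HI (nat (x 0)) l)}"

definition valid :: "nat \<Rightarrow> nat \<Rightarrow> (nat \<Rightarrow> nat \<Rightarrow> int) \<Rightarrow> (nat \<Rightarrow> nat \<Rightarrow> int) \<Rightarrow> bool" where
  "valid d k LO HI \<longleftrightarrow>
     (\<forall>c l. c < k \<and> 1 \<le> l \<and> l < d \<longrightarrow> LO c l \<le> HI c l) \<and>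
     (\<forall>l. 1 \<le> l \<and> l < d \<longrightarrow> LO 0 l = 0) \<and>
     (\<forall>c l. Suc c < k \<and> 1 \<le> l \<and> l < d \<longrightarrow> LO c l \<le> LO (Suc c) l \<and> LO (Suc c) l \<le> HI c l)"

definition cp :: "nat \<Rightarrow> int \<Rightarrow> (nat \<Rightarrow> int) \<Rightarrow> (nat \<Rightarrow> int)" where
  "cp d c f = (\<lambda>j. if j = 0 then c else if j < d then f j else 0)"

lemma cp_cells: "1 \<le> d \<Longrightarrow> cp d c f \<in> cells d"
  by (simp add: cp_def cells_def)

lemma box_path:
  assumes conv: "\<And>y x z. y \<in> Q \<Longrightarrow> x \<in> Q \<Longrightarrow> y 0 = x 0 \<Longrightarrow> z \<in> cells d \<Longrightarrow> z 0 = x 0 \<Longrightarrow>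
                   (\<forall>j. y j \<le> z j \<and> z j \<le> x j) \<Longrightarrow> z \<in> Q"
    and Qc: "Q \<subseteq> cells d"
  shows "y \<in> Q \<Longrightarrow> x \<in> Q \<Longrightarrow> y 0 = x 0 \<Longrightarrow> (\<forall>j. y j \<le> x j) \<Longrightarrow>
         (\<Sum>j<d. x j - y j) = int n \<Longrightarrow> (dstep d Q)\<^sup>*\<^sup>* y x"
proof (induction n arbitrary: y)
  case 0
  have "\<forall>j\<in>{..<d}. x j - y j = 0"
    using 0 by (subst sum_nonneg_eq_0_iff[symmetric]) auto
  moreover have "y \<in> cells d" "x \<in> cells d" using 0 Qc by auto
  ultimately have "y = x"
    unfolding cells_def fun_eq_iff by (metis (mono_tags, lifting) eq_iff_diff_eq_0 lessThan_iff mem_Collect_eq not_le)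
  then show ?case by simp
next
  case (Suc n)
  have "\<exists>j<d. y j < x j"
  proof (rule ccontr)
    assume "\<not> ?thesis"
    then have le: "\<And>j. j < d \<Longrightarrow> x j \<le> y j" by (meson not_less)
    have "\<forall>j\<in>{..<d}. x j - y j = 0"
    proof
      fix j assume "j \<in> {..<d}"
      then have "x j \<le> y j" using le by simp
      moreover have "y j \<le> x j" using Suc.prems(4) by simp
      ultimately show "x j - y j = 0" by simp
    qed
    then have "(\<Sum>j<d. x j - y j) = 0" by simp
    then show False using Suc.prems(5) by simp
  qed
  then obtain j where j: "j < d" "y j < x j" by blast
  have j0: "j \<noteq> 0" using j Suc.prems(3) by (metis less_irrefl)
  define y' where "y' = step j y"
  have y'app: "y' i = y i + (if i = j then 1 else 0)" for i by (simp add: y'_def step_app)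
  have yc: "y \<in> cells d" using Suc.prems Qc by auto
  have y'c: "y' \<in> cells d" using yc j by (auto simp: cells_def y'app)
  have y'Q: "y' \<in> Q"
    by (rule conv[OF Suc.prems(1) Suc.prems(2) Suc.prems(3) y'c]) (use Suc.prems j j0 in \<open>auto simp: y'app\<close>)
  have "(\<Sum>i<d. x i - y i) = (\<Sum>i<d. (x i - y' i) + (if i = j then 1 else 0))"
    by (rule sum.cong) (auto simp: y'app)
  also have "\<dots> = (\<Sum>i<d. x i - y' i) + 1"
    using j by (simp add: sum.distrib)
  finally have sm: "(\<Sum>i<d. x i - y' i) = int n" using Suc.prems(5) by simp
  have e0: "y' 0 = x 0" using j0 Suc.prems(3) by (simp add: y'app)
  have le: "\<forall>i. y' i \<le> x i"
  proof
    fix i show "y' i \<le> x i" using Suc.prems(4) j by (cases "i = j") (auto simp: y'app)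
  qed
  have "(dstep d Q)\<^sup>*\<^sup>* y' x" by (rule Suc.IH[OF y'Q Suc.prems(2) e0 le sm])
  moreover have "dstep d Q y y'" using Suc.prems(1) y'Q j by (auto simp: dstep_def y'_def)
  ultimately show ?case by (metis converse_rtranclp_into_rtranclp)
qed

lemma box_path':
  assumes conv: "\<And>y x z. y \<in> Q \<Longrightarrow> x \<in> Q \<Longrightarrow> y 0 = x 0 \<Longrightarrow> z \<in> cells d \<Longrightarrow> z 0 = x 0 \<Longrightarrow>
                   (\<forall>j. y j \<le> z j \<and> z j \<le> x j) \<Longrightarrow> z \<in> Q"
    and Qc: "Q \<subseteq> cells d"
    and "y \<in> Q" "x \<in> Q" "y 0 = x 0" "\<forall>j. y j \<le> x j"
  shows "(dstep d Q)\<^sup>*\<^sup>* y x"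
proof -
  have "(\<Sum>j<d. x j - y j) \<ge> 0" using assms(6) by (intro sum_nonneg) simp
  then obtain n where n: "(\<Sum>j<d. x j - y j) = int n" using nonneg_int_cases by blast
  show ?thesis by (rule box_path[OF conv Qc assms(3,4,5,6) n])
qed

context
  fixes d k :: nat and LO HI :: "nat \<Rightarrow> nat \<Rightarrow> int"
  assumes V: "valid d k LO HI" and k: "k \<ge> 1" and d1: "d \<ge> 1"
begin

lemma V1: "c < k \<Longrightarrow> 1 \<le> l \<Longrightarrow> l < d \<Longrightarrow> LO c l \<le> HI c l"
  using V by (simp add: valid_def)
lemma V2: "1 \<le> l \<Longrightarrow> l < d \<Longrightarrow> LO 0 l = 0"
  using V by (simp add: valid_def)
lemma V3: "Suc c < k \<Longrightarrow> 1 \<le> l \<Longrightarrow> l < d \<Longrightarrow> LO c l \<le> LO (Suc c) l \<and> LO (Suc c) l \<le> HI c l"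
  using V by (simp add: valid_def)

lemma Phi_conv:
  assumes y: "y \<in> Phi d k LO HI" and x: "x \<in> Phi d k LO HI" and yx: "y 0 = x 0"
    and z: "z \<in> cells d" "z 0 = x 0" "\<forall>j. y j \<le> z j \<and> z j \<le> x j"
  shows "z \<in> Phi d k LO HI"
proof -
  have yb: "\<And>l. 1 \<le> l \<Longrightarrow> l < d \<Longrightarrow> LO (nat (x 0)) l \<le> y l"
    using y yx unfolding Phi_def by auto
  have xb: "\<And>l. 1 \<le> l \<Longrightarrow> l < d \<Longrightarrow> x l \<le> HI (nat (x 0)) l"
    using x unfolding Phi_def by auto
  have "\<And>l. 1 \<le> l \<Longrightarrow> l < d \<Longrightarrow> LO (nat (z 0)) l \<le> z l \<and> z l \<le> HI (nat (z 0)) l"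
    using yb xb z by (metis order_trans)
  moreover have "0 \<le> z 0" "z 0 < int k" using x z unfolding Phi_def by auto
  ultimately show ?thesis using z unfolding Phi_def by auto
qed

lemma Phi_cells: "Phi d k LO HI \<subseteq> cells d"
  by (auto simp: Phi_def)

lemma cp_in: "c < k \<Longrightarrow> cp d (int c) (LO c) \<in> Phi d k LO HI"
  using d1 by (auto simp: Phi_def cp_def cells_def V1)

lemma cp0: "cp d 0 (LO 0) = (\<lambda>j. 0)"
  by (auto simp: cp_def fun_eq_iff V2)

lemma zero_in: "(\<lambda>j. 0) \<in> Phi d k LO HI"
  using cp_in[of 0] k cp0 by simp

lemma reach_cp: "c < k \<Longrightarrow> (dstep d (Phi d k LO HI))\<^sup>*\<^sup>* (\<lambda>j. 0) (cp d (int c) (LO c))"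
proof (induction c)
  case 0 then show ?case using cp0 by simp
next
  case (Suc c)
  define q where "q = cp d (int c) (LO (Suc c))"
  have qin: "q \<in> Phi d k LO HI"
    using Suc.prems V3[of c] d1 by (auto simp: Phi_def q_def cp_def cells_def)
  have "(dstep d (Phi d k LO HI))\<^sup>*\<^sup>* (cp d (int c) (LO c)) q"
    by (rule box_path'[OF Phi_conv Phi_cells cp_in qin])
       (use Suc.prems V3[of c] in \<open>auto simp: q_def cp_def\<close>)
  moreover have "step 0 q = cp d (int (Suc c)) (LO (Suc c))"
    by (auto simp: fun_eq_iff step_app q_def cp_def)
  then have "dstep d (Phi d k LO HI) q (cp d (int (Suc c)) (LO (Suc c)))"
    using qin cp_in[OF Suc.prems] d1 by (auto simp: dstep_def intro!: exI[of _ 0] )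
  ultimately show ?case using Suc by (meson rtranclp.rtrancl_into_rtrancl rtranclp_trans Suc_lessD)
qed

lemma reach_all: "x \<in> Phi d k LO HI \<Longrightarrow> (dstep d (Phi d k LO HI))\<^sup>*\<^sup>* (\<lambda>j. 0) x"
proof -
  assume x: "x \<in> Phi d k LO HI"
  define c where "c = nat (x 0)"
  have c: "c < k" "int c = x 0" using x by (auto simp: Phi_def c_def)
  have "(dstep d (Phi d k LO HI))\<^sup>*\<^sup>* (cp d (int c) (LO c)) x"
    by (rule box_path'[OF Phi_conv Phi_cells cp_in[OF c(1)] x])
       (use x c in \<open>auto simp: cp_def Phi_def cells_def c_def\<close>)
  then show ?thesis using reach_cp[OF c(1)] by (rule rtranclp_trans[rotated])
qed

lemma Phi_nonneg: "x \<in> Phi d k LO HI \<Longrightarrow> 0 \<le> x j"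
  using reach_ge[OF reach_all] by force

lemma Phi_finite: "finite (Phi d k LO HI)"
proof -
  have "Phi d k LO HI \<subseteq> (\<Union>c<k. {x\<in>cells d. \<forall>j<d. cp d (int c) (LO c) j \<le> x j \<and> x j \<le> cp d (int c) (HI c) j})"
  proof
    fix x assume x: "x \<in> Phi d k LO HI"
    then have "nat (x 0) < k" "int (nat (x 0)) = x 0" by (auto simp: Phi_def)
    then show "x \<in> (\<Union>c<k. {x\<in>cells d. \<forall>j<d. cp d (int c) (LO c) j \<le> x j \<and> x j \<le> cp d (int c) (HI c) j})"
      using x by (auto simp: Phi_def cp_def intro!: bexI[of _ "nat (x 0)"])
  qed
  moreover have "finite (\<Union>c<k. {x\<in>cells d. \<forall>j<d. cp d (int c) (LO c) j \<le> x j \<and> x j \<le> cp d (int c) (HI c) j})"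
    using finite_bcells by blast
  ultimately show ?thesis by (rule finite_subset)
qed

lemma Phi_dp: "directed_plateau d (Phi d k LO HI)"
proof -
  have reach: "\<forall>x\<in>Phi d k LO HI. (dstep d (Phi d k LO HI))\<^sup>*\<^sup>* (\<lambda>j. 0) x"
    using reach_all by blast
  have ph: "polyhypercube d (Phi d k LO HI)"
    unfolding polyhypercube_iff
    using Phi_finite zero_in Phi_cells directed_connected[OF reach] by blast
  have dir: "directed d (Phi d k LO HI)"
    unfolding directed_iff using ph reach zero_in by blast
  have "is_plateau d c (stratum (Phi d k LO HI) c)" if "c \<in> (\<lambda>x. x 0) ` Phi d k LO HI" for c
    unfolding is_plateau_def
    by (rule exI[of _ "LO (nat c)"], rule exI[of _ "HI (nat c)"]) (use that in \<open>auto simp: stratum_def Phi_def\<close>)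
  then show ?thesis using dir by (simp add: directed_plateau_def)
qed

lemma Phi_proj:
  assumes l: "1 \<le> l" "l < d"
  shows "(\<lambda>x. (x 0, x l)) ` Phi d k LO HI = (\<lambda>p. (int (fst p), snd p)) ` (SIGMA c:{..<k}. {LO c l..HI c l})"
proof
  show "(\<lambda>x. (x 0, x l)) ` Phi d k LO HI \<subseteq> (\<lambda>p. (int (fst p), snd p)) ` (SIGMA c:{..<k}. {LO c l..HI c l})"
  proof
    fix z assume "z \<in> (\<lambda>x. (x 0, x l)) ` Phi d k LO HI"
    then obtain x where x: "x \<in> Phi d k LO HI" "z = (x 0, x l)" by blast
    then have "(nat (x 0), x l) \<in> (SIGMA c:{..<k}. {LO c l..HI c l})" using l by (auto simp: Phi_def)
    moreover have "z = (\<lambda>p. (int (fst p), snd p)) (nat (x 0), x l)" using x by (auto simp: Phi_def)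
    ultimately show "z \<in> (\<lambda>p. (int (fst p), snd p)) ` (SIGMA c:{..<k}. {LO c l..HI c l})" by blast
  qed
next
  show "(\<lambda>p. (int (fst p), snd p)) ` (SIGMA c:{..<k}. {LO c l..HI c l}) \<subseteq> (\<lambda>x. (x 0, x l)) ` Phi d k LO HI"
  proof
    fix z assume "z \<in> (\<lambda>p. (int (fst p), snd p)) ` (SIGMA c:{..<k}. {LO c l..HI c l})"
    then obtain c y where cy: "c < k" "LO c l \<le> y" "y \<le> HI c l" "z = (int c, y)" by auto
    define x where "x = (\<lambda>j. if j = 0 then int c else if j = l then y else if j < d then LO c j else 0)"
    have "x \<in> Phi d k LO HI" using cy l by (auto simp: x_def Phi_def cells_def V1)
    moreover have "z = (x 0, x l)" using cy l by (simp add: x_def)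
    ultimately show "z \<in> (\<lambda>x. (x 0, x l)) ` Phi d k LO HI" by blast
  qed
qed

lemma Phi_area:
  "lateral_area d (Phi d k LO HI) = (\<Sum>l\<in>{1..<d}. \<Sum>c<k. nat (HI c l - LO c l + 1))"
  unfolding lateral_area_def
proof (rule sum.cong[OF refl])
  fix l assume "l \<in> {1..<d}"
  then have l: "1 \<le> l" "l < d" by auto
  have "card ((\<lambda>x. (x 0, x l)) ` Phi d k LO HI) = card (SIGMA c:{..<k}. {LO c l..HI c l})"
    unfolding Phi_proj[OF l] by (rule card_image) (auto simp: inj_on_def)
  also have "\<dots> = (\<Sum>c<k. nat (HI c l - LO c l + 1))" by simp
  finally show "card ((\<lambda>x. (x 0, x l)) ` Phi d k LO HI) = (\<Sum>c<k. nat (HI c l - LO c l + 1))" .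
qed

end



lemma hp_in:
  assumes "valid d k LO HI" "k \<ge> 1" "d \<ge> 1" "c < k"
  shows "cp d (int c) (HI c) \<in> Phi d k LO HI"
  using assms V1[OF assms(1-3)] by (auto simp: Phi_def cp_def cells_def)

lemma Phi_inj:
  assumes v: "valid d k LO HI" "valid d k' LO' HI'" and k: "k \<ge> 1" "k' \<ge> 1" and d: "d \<ge> 1"
    and eq: "Phi d k LO HI = Phi d k' LO' HI'"
  shows "k = k' \<and> (\<forall>c<k. \<forall>l. 1 \<le> l \<and> l < d \<longrightarrow> LO c l = LO' c l \<and> HI c l = HI' c l)"
proof -
  have "cp d (int (k - 1)) (LO (k - 1)) \<in> Phi d k' LO' HI'"
    using cp_in[OF v(1) k(1) d, of "k - 1"] eq k by simp
  then have "k \<le> k'" by (auto simp: Phi_def cp_def)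
  moreover have "cp d (int (k' - 1)) (LO' (k' - 1)) \<in> Phi d k LO HI"
    using cp_in[OF v(2) k(2) d, of "k' - 1"] eq k by simp
  then have "k' \<le> k" by (auto simp: Phi_def cp_def)
  ultimately have kk: "k = k'" by simp
  have "LO c l = LO' c l \<and> HI c l = HI' c l" if c: "c < k" and l: "1 \<le> l" "l < d" for c l
  proof -
    have c': "c < k'" using c kk by simp
    have "cp d (int c) (LO c) \<in> Phi d k' LO' HI'" using cp_in[OF v(1) k(1) d c] eq by simp
    then have 1: "LO' c l \<le> LO c l" using l by (auto simp: Phi_def cp_def)
    have "cp d (int c) (LO' c) \<in> Phi d k LO HI" using cp_in[OF v(2) k(2) d c'] eq by simp
    then have 2: "LO c l \<le> LO' c l" using l by (auto simp: Phi_def cp_def)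
    have "cp d (int c) (HI c) \<in> Phi d k' LO' HI'" using hp_in[OF v(1) k(1) d c] eq by simp
    then have 3: "HI c l \<le> HI' c l" using l by (auto simp: Phi_def cp_def)
    have "cp d (int c) (HI' c) \<in> Phi d k LO HI" using hp_in[OF v(2) k(2) d c'] eq by simp
    then have 4: "HI' c l \<le> HI c l" using l by (auto simp: Phi_def cp_def)
    show ?thesis using 1 2 3 4 by simp
  qed
  then show ?thesis using kk by blast
qed

lemma Phi_cong:
  assumes "\<forall>c<k. \<forall>l. 1 \<le> l \<and> l < d \<longrightarrow> LO c l = LO' c l \<and> HI c l = HI' c l"
  shows "Phi d k LO HI = Phi d k LO' HI'"
  unfolding Phi_def
proof (rule Collect_cong)
  fix x
  show "(x \<in> cells d \<and> 0 \<le> x 0 \<and> x 0 < int k \<and>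
     (\<forall>l. 1 \<le> l \<and> l < d \<longrightarrow> LO (nat (x 0)) l \<le> x l \<and> x l \<le> HI (nat (x 0)) l)) =
    (x \<in> cells d \<and> 0 \<le> x 0 \<and> x 0 < int k \<and>
     (\<forall>l. 1 \<le> l \<and> l < d \<longrightarrow> LO' (nat (x 0)) l \<le> x l \<and> x l \<le> HI' (nat (x 0)) l))"
  proof (cases "0 \<le> x 0 \<and> x 0 < int k")
    case True
    then have "nat (x 0) < k" using nat_less_iff by blast
    then have "\<forall>l. 1 \<le> l \<and> l < d \<longrightarrow> LO (nat (x 0)) l = LO' (nat (x 0)) l \<and> HI (nat (x 0)) l = HI' (nat (x 0)) l"
      using assms by blast
    then show ?thesis by auto
  next
    case False then show ?thesis by auto
  qed
qed

lemma dp_decomp: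
  assumes dp: "directed_plateau d P" and d1: "d \<ge> 1"
  shows "\<exists>k LO HI r. k \<ge> 1 \<and> valid d k LO HI \<and> r \<in> cells d \<and> P = translate r (Phi d k LO HI)"
proof -
  from dp obtain r where rP: "r \<in> P" and reach: "\<forall>x\<in>P. (dstep d P)\<^sup>*\<^sup>* r x"
    and fin: "finite P" and Pc: "P \<subseteq> cells d"
    and plat: "\<forall>c\<in>(\<lambda>x. x 0) ` P. is_plateau d c (stratum P c)"
    by (auto simp: directed_plateau_def directed_iff polyhypercube_def)
  have ge: "\<And>x j. x \<in> P \<Longrightarrow> r j \<le> x j" using reach reach_ge by blast
  define M where "M = Max ((\<lambda>x. x 0) ` P)"
  have M: "\<And>x. x \<in> P \<Longrightarrow> x 0 \<le> M" using fin by (auto simp: M_def)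
  have "M \<in> (\<lambda>x. x 0) ` P" using fin rP unfolding M_def by (intro Max_in) auto
  then obtain xm where xm: "xm \<in> P" "xm 0 = M" by auto
  define k where "k = nat (M - r 0) + 1"
  have k1: "k \<ge> 1" by (simp add: k_def)
  have layer: "\<exists>y\<in>P. y 0 = r 0 + int c" if "c < k" for c
  proof -
    have "r 0 + int c \<le> xm 0" using that xm ge[OF xm(1), of 0] by (simp add: k_def)
    then show ?thesis using reach_layer[OF reach[rule_format, OF xm(1)] rP] by simp
  qed
  have "\<forall>c. \<exists>ab. c < k \<longrightarrow> stratum P (r 0 + int c) =
      {x \<in> cells d. x 0 = r 0 + int c \<and> (\<forall>l. 1 \<le> l \<and> l < d \<longrightarrow> fst ab l \<le> x l \<and> x l \<le> snd ab l)}"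
  proof
    fix c
    show "\<exists>ab. c < k \<longrightarrow> stratum P (r 0 + int c) =
      {x \<in> cells d. x 0 = r 0 + int c \<and> (\<forall>l. 1 \<le> l \<and> l < d \<longrightarrow> fst ab l \<le> x l \<and> x l \<le> snd ab l)}"
    proof (cases "c < k")
      case True
      then obtain y where "y \<in> P" "y 0 = r 0 + int c" using layer True by blast
      then have "is_plateau d (r 0 + int c) (stratum P (r 0 + int c))" using plat by force
      then obtain a b where "stratum P (r 0 + int c) =
          {x \<in> cells d. x 0 = r 0 + int c \<and> (\<forall>l. 1 \<le> l \<and> l < d \<longrightarrow> a l \<le> x l \<and> x l \<le> b l)}"
        unfolding is_plateau_def by blast
      then show ?thesis by (intro exI[of _ "(a, b)"]) simp
    qed simp
  qed
  from choice[OF this] obtain f where f: "\<forall>c. c < k \<longrightarrow> stratum P (r 0 + int c) =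
      {x \<in> cells d. x 0 = r 0 + int c \<and> (\<forall>l. 1 \<le> l \<and> l < d \<longrightarrow> fst (f c) l \<le> x l \<and> x l \<le> snd (f c) l)}"
    by blast
  define A where "A c = fst (f c)" for c
  define B where "B c = snd (f c)" for c
  have memb: "x \<in> P \<longleftrightarrow> (\<forall>l. 1 \<le> l \<and> l < d \<longrightarrow> A c l \<le> x l \<and> x l \<le> B c l)"
    if "c < k" "x \<in> cells d" "x 0 = r 0 + int c" for x c
  proof -
    have "x \<in> P \<longleftrightarrow> x \<in> stratum P (r 0 + int c)" using that by (simp add: stratum_def)
    also have "\<dots> \<longleftrightarrow> (\<forall>l. 1 \<le> l \<and> l < d \<longrightarrow> A c l \<le> x l \<and> x l \<le> B c l)"
      using f that by (simp add: A_def B_def)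
    finally show ?thesis .
  qed
  have AB: "A c l \<le> B c l" if cl: "c < k" "1 \<le> l" "l < d" for c l
  proof -
    obtain y where yP: "y \<in> P" and ye: "y 0 = r 0 + int c" using layer cl(1) by blast
    have yc: "y \<in> cells d" using yP Pc by blast
    have "A c l \<le> y l \<and> y l \<le> B c l" using memb[OF cl(1) yc ye] yP cl by blast
    then show ?thesis by linarith
  qed
  define z where "z c = (\<lambda>j. if j = 0 then r 0 + int c else if j < d then A c j else 0)" for c
  have zc: "z c \<in> cells d" for c using d1 by (simp add: z_def cells_def)
  have zP: "z c \<in> P" if "c < k" for c
    using memb[OF that zc] AB[OF that] by (simp add: z_def)
  have A0: "A 0 l = r l" if "1 \<le> l" "l < d" for l
  proof -
    have "r \<in> cells d" using rP Pc by blast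
    then have "A 0 l \<le> r l" using memb[of 0 r] rP that k1 by simp
    moreover have "r l \<le> z 0 l" using ge[OF zP[of 0]] k1 by simp
    then have "r l \<le> A 0 l" using that by (simp add: z_def)
    ultimately show ?thesis by simp
  qed
  have A3: "A c l \<le> A (Suc c) l \<and> A (Suc c) l \<le> B c l" if c: "Suc c < k" and l: "1 \<le> l" "l < d" for c l
  proof -
    have rz: "(dstep d P)\<^sup>*\<^sup>* r (z (Suc c))" using reach zP[OF c] by blast
    have "z (Suc c) 0 \<noteq> r 0" by (simp add: z_def)
    then have zr: "z (Suc c) \<noteq> r" by metis
    have "\<exists>y. dstep d P y (z (Suc c))" using rz zr by (cases rule: rtranclp.cases) auto
    then obtain y where y: "dstep d P y (z (Suc c))" by blast
    then obtain i where yP: "y \<in> P" and i: "i < d" and zs: "z (Suc c) = step i y"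
      by (auto simp: dstep_def)
    have yv: "y j = z (Suc c) j - (if j = i then 1 else 0)" for j
      using zs by (simp add: step_app)
    have yc: "y \<in> cells d" using yP Pc by blast
    show ?thesis
    proof (cases "i = 0")
      case True
      then have "y 0 = r 0 + int c" by (simp add: yv z_def)
      then have "A c l \<le> y l \<and> y l \<le> B c l" using memb[OF Suc_lessD[OF c] yc] yP l by blast
      moreover have "y l = A (Suc c) l" using True l by (simp add: yv z_def)
      ultimately show ?thesis using memb by simp
    next
      case False
      then have "y 0 = r 0 + int (Suc c)" by (simp add: yv z_def)
      then have "A (Suc c) i \<le> y i" using memb[OF c yc] yP False i by simp
      moreover have "y i = A (Suc c) i - 1" using False i by (simp add: yv z_def)
      ultimately show ?thesis by simp
    qed
  qed
  define LO where "LO c l = A c l - r l" for c l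
  define HI where "HI c l = B c l - r l" for c l
  have v: "valid d k LO HI"
    unfolding valid_def LO_def HI_def
  proof (intro conjI allI impI)
    fix c l assume "c < k \<and> 1 \<le> l \<and> l < d"
    then show "A c l - r l \<le> B c l - r l" using AB by simp
  next
    fix l assume "1 \<le> l \<and> l < d"
    then show "A 0 l - r l = 0" using A0 by simp
  next
    fix c l assume "Suc c < k \<and> 1 \<le> l \<and> l < d"
    then show "A c l - r l \<le> A (Suc c) l - r l" using A3 by simp
  next
    fix c l assume "Suc c < k \<and> 1 \<le> l \<and> l < d"
    then show "A (Suc c) l - r l \<le> B c l - r l" using A3 by simp
  qed
  have rc: "r \<in> cells d" using rP Pc by blast
  have "P = translate r (Phi d k LO HI)"
    unfolding translate_def
  proof
    show "P \<subseteq> (\<lambda>x j. x j + r j) ` Phi d k LO HI"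
    proof
      fix x assume xP: "x \<in> P"
      define x' where "x' = (\<lambda>j. x j - r j)"
      have xc: "x \<in> cells d" using xP Pc by blast
      have x'c: "x' \<in> cells d" using xc rc by (simp add: cells_def x'_def)
      have n0: "0 \<le> x' 0" using ge[OF xP] by (simp add: x'_def)
      have lk: "x' 0 < int k" using M[OF xP] by (simp add: x'_def k_def)
      define c where "c = nat (x' 0)"
      have c: "c < k" "x 0 = r 0 + int c" using n0 lk by (auto simp: c_def x'_def)
      have "\<forall>l. 1 \<le> l \<and> l < d \<longrightarrow> A c l \<le> x l \<and> x l \<le> B c l" using memb[OF c(1) xc c(2)] xP by blast
      moreover have cc: "nat (x 0 - r 0) = c" by (simp add: c_def x'_def)
      ultimately have "x' \<in> Phi d k LO HI" using x'c n0 lk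
        by (auto simp: Phi_def LO_def HI_def x'_def cc)
      moreover have "x = (\<lambda>j. x' j + r j)" by (simp add: x'_def)
      ultimately show "x \<in> (\<lambda>x j. x j + r j) ` Phi d k LO HI" by blast
    qed
  next
    show "(\<lambda>x j. x j + r j) ` Phi d k LO HI \<subseteq> P"
    proof
      fix x assume "x \<in> (\<lambda>x j. x j + r j) ` Phi d k LO HI"
      then obtain x' where x': "x' \<in> Phi d k LO HI" and x: "x = (\<lambda>j. x' j + r j)" by blast
      define c where "c = nat (x' 0)"
      have c: "c < k" "x 0 = r 0 + int c" using x' x by (auto simp: c_def Phi_def)
      have xc: "x \<in> cells d" using x' rc x by (auto simp: Phi_def cells_def)
      have "\<forall>l. 1 \<le> l \<and> l < d \<longrightarrow> A c l \<le> x l \<and> x l \<le> B c l"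
        using x' x by (auto simp: Phi_def LO_def HI_def c_def[symmetric])
      then show "x \<in> P" using memb[OF c(1) xc c(2)] by blast
    qed
  qed
  then show ?thesis using k1 v rc by blast
qed



definition LOp :: "(int \<times> int) list list \<Rightarrow> nat \<Rightarrow> nat \<Rightarrow> int" where
  "LOp pss c l = fst (pss ! (l - 1) ! c)"
definition HIp :: "(int \<times> int) list list \<Rightarrow> nat \<Rightarrow> nat \<Rightarrow> int" where
  "HIp pss c l = snd (pss ! (l - 1) ! c)"
definition Psi :: "nat \<Rightarrow> (int \<times> int) list list \<Rightarrow> (nat \<Rightarrow> int) set" where
  "Psi d pss = Phi d (length (hd pss)) (LOp pss) (HIp pss)"
definition Dat :: "nat \<Rightarrow> (int \<times> int) list list set" where
  "Dat d = {pss. \<exists>k\<ge>1. pss \<in> Lists (d - 1) (Prof k)}"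

lemma sum_list_map_nth: "sum_list (map f xs) = (\<Sum>i<length xs. f (xs ! i))"
  by (simp add: sum_list_sum_nth atLeast0LessThan)

lemma pss_basic:
  assumes d: "d \<ge> 2" and k: "k \<ge> 1" and p: "pss \<in> Lists (d - 1) (Prof k)"
  shows "length (hd pss) = k \<and> valid d k (LOp pss) (HIp pss) \<and> Psi d pss = Phi d k (LOp pss) (HIp pss)"
proof -
  have len: "length pss = d - 1" using p by (simp add: Lists_def)
  have inP: "pss ! i \<in> Prof k" if "i < d - 1" for i
    using p that len by (auto simp: Lists_def)
  have ne: "pss \<noteq> []" using len d by auto
  have hd: "length (hd pss) = k"
    using inP[of 0] d len by (simp add: hd_conv_nth[OF ne] Prof_def)
  have pl: "pss ! (l - 1) \<in> Prof k" if "1 \<le> l" "l < d" for l using inP that by simp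
  have "valid d k (LOp pss) (HIp pss)"
    unfolding valid_def
  proof (intro conjI allI impI)
    fix c l assume a: "c < k \<and> 1 \<le> l \<and> l < d"
    then have "chain (pss ! (l - 1))" "length (pss ! (l - 1)) = k" using pl by (auto simp: Prof_def)
    then show "LOp pss c l \<le> HIp pss c l" using a by (simp add: chain_def LOp_def HIp_def)
  next
    fix l assume a: "1 \<le> l \<and> l < d"
    then have "fst (hd (pss ! (l - 1))) = 0" "length (pss ! (l - 1)) = k" using pl by (auto simp: Prof_def)
    then show "LOp pss 0 l = 0" using k by (cases "pss ! (l - 1)") (auto simp: LOp_def)
  next
    fix c l assume a: "Suc c < k \<and> 1 \<le> l \<and> l < d"
    then have "chain (pss ! (l - 1))" "length (pss ! (l - 1)) = k" using pl by (auto simp: Prof_def)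
    then show "LOp pss c l \<le> LOp pss (Suc c) l" using a by (simp add: chain_def LOp_def HIp_def)
  next
    fix c l assume a: "Suc c < k \<and> 1 \<le> l \<and> l < d"
    then have "chain (pss ! (l - 1))" "length (pss ! (l - 1)) = k" using pl by (auto simp: Prof_def)
    then show "LOp pss (Suc c) l \<le> HIp pss c l" using a by (simp add: chain_def LOp_def HIp_def)
  qed
  then show ?thesis using hd by (simp add: Psi_def)
qed

lemma pss_area:
  assumes d: "d \<ge> 2" and k: "k \<ge> 1" and p: "pss \<in> Lists (d - 1) (Prof k)"
  shows "lateral_area d (Psi d pss) = wl wp pss"
proof -
  note b = pss_basic[OF d k p]
  have len: "length pss = d - 1" using p by (simp add: Lists_def)
  have lk: "length (pss ! i) = k" if "i < d - 1" for i
  proof -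
    have "pss ! i \<in> set pss" using that len by simp
    then show ?thesis using p by (auto simp: Lists_def Prof_def)
  qed
  have "lateral_area d (Psi d pss) = (\<Sum>l\<in>{1..<d}. \<Sum>c<k. nat (HIp pss c l - LOp pss c l + 1))"
    using b Phi_area[of d k "LOp pss" "HIp pss"] k d by simp
  also have "\<dots> = (\<Sum>i\<in>{0..<d - 1}. \<Sum>c<k. nat (HIp pss c (Suc i) - LOp pss c (Suc i) + 1))"
  proof -
    have "{1..<d} = {Suc 0..<Suc (d - 1)}" using d by simp
    then show ?thesis by (simp only: sum.shift_bounds_Suc_ivl)
  qed
  also have "\<dots> = (\<Sum>i<length pss. wp (pss ! i))"
    unfolding len wp_def
    by (rule sum.cong) (auto simp: sum_list_map_nth lk LOp_def HIp_def)
  also have "\<dots> = wl wp pss" by (simp add: wl_def sum_list_map_nth)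
  finally show ?thesis .
qed

lemma build_pss:
  assumes d: "d \<ge> 2" and k: "k \<ge> 1" and v: "valid d k LO HI"
  defines "pss \<equiv> map (\<lambda>l. map (\<lambda>c. (LO c l, HI c l)) [0..<k]) [1..<d]"
  shows "pss \<in> Lists (d - 1) (Prof k) \<and>
    (\<forall>c<k. \<forall>l. 1 \<le> l \<and> l < d \<longrightarrow> LOp pss c l = LO c l \<and> HIp pss c l = HI c l)"
proof -
  have "map (\<lambda>c. (LO c l, HI c l)) [0..<k] \<in> Prof k" if l: "1 \<le> l" "l < d" for l
  proof -
    have "chain (map (\<lambda>c. (LO c l, HI c l)) [0..<k])"
      unfolding chain_def using V1[OF v k] V3[OF v k] l by auto
    moreover have "fst (hd (map (\<lambda>c. (LO c l, HI c l)) [0..<k])) = 0"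
      using k V2[OF v k] l by (simp add: hd_map upt_conv_Cons)
    ultimately show ?thesis by (simp add: Prof_def)
  qed
  then have "pss \<in> Lists (d - 1) (Prof k)" by (auto simp: pss_def Lists_def)
  moreover have "LOp pss c l = LO c l \<and> HIp pss c l = HI c l" if "c < k" "1 \<le> l" "l < d" for c l
    using that by (simp add: pss_def LOp_def HIp_def)
  ultimately show ?thesis by blast
qed

lemma translate_area: "lateral_area d (translate r Q) = lateral_area d Q"
  unfolding lateral_area_def
proof (rule sum.cong[OF refl])
  fix l
  have "(\<lambda>x. (x 0, x l)) ` translate r Q = (\<lambda>p. (fst p + r 0, snd p + r l)) ` ((\<lambda>x. (x 0, x l)) ` Q)"
    by (simp add: translate_def image_image)
  also have "card \<dots> = card ((\<lambda>x. (x 0, x l)) ` Q)"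
    by (rule card_image) (auto simp: inj_on_def)
  finally show "card ((\<lambda>x. (x 0, x l)) ` translate r Q) = card ((\<lambda>x. (x 0, x l)) ` Q)" .
qed

lemma translate_translate: "translate v (translate r Q) = translate (\<lambda>j. v j + r j) Q"
  by (simp add: translate_def image_image add.assoc add.commute[of "r _"])

lemma translate_0: "translate (\<lambda>j. 0) Q = Q"
  by (simp add: translate_def)

lemma trans_class_translate:
  assumes r: "r \<in> cells d"
  shows "trans_class d (translate r Q) = trans_class d Q"
proof
  show "trans_class d (translate r Q) \<subseteq> trans_class d Q"
  proof
    fix Z assume "Z \<in> trans_class d (translate r Q)"
    then obtain v where v: "v \<in> cells d" "Z = translate v (translate r Q)" by (auto simp: trans_class_def)
    then have "Z = translate (\<lambda>j. v j + r j) Q" "(\<lambda>j. v j + r j) \<in> cells d"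
      using r by (auto simp: translate_translate cells_def)
    then show "Z \<in> trans_class d Q" by (auto simp: trans_class_def)
  qed
next
  show "trans_class d Q \<subseteq> trans_class d (translate r Q)"
  proof
    fix Z assume "Z \<in> trans_class d Q"
    then obtain v where v: "v \<in> cells d" "Z = translate v Q" by (auto simp: trans_class_def)
    have "translate (\<lambda>j. v j - r j) (translate r Q) = translate v Q"
      by (simp add: translate_translate)
    moreover have "(\<lambda>j. v j - r j) \<in> cells d" using v r by (auto simp: cells_def)
    ultimately show "Z \<in> trans_class d (translate r Q)" using v by (auto simp: trans_class_def)
  qed
qed

lemma trans_class_inj:
  assumes "(\<lambda>j. 0) \<in> Q" "(\<lambda>j. 0) \<in> Q'" "\<And>x j. x \<in> Q \<Longrightarrow> 0 \<le> x j" "\<And>x j. x \<in> Q' \<Longrightarrow> 0 \<le> x j"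
    and eq: "trans_class d Q = trans_class d Q'"
  shows "Q = Q'"
proof -
  have "Q' \<in> trans_class d Q'"
    unfolding trans_class_def using translate_0[of Q'] by (auto simp: cells_def intro!: exI[of _ "\<lambda>j. 0"])
  then have "Q' \<in> trans_class d Q" using eq by simp
  then obtain v where v: "Q' = translate v Q" by (auto simp: trans_class_def)
  have le: "v j \<le> 0" for j
  proof -
    obtain x where "x \<in> Q" "(\<lambda>j. 0) = (\<lambda>j. x j + v j)" using assms(2) v by (auto simp: translate_def)
    then have "x j + v j = 0" by metis
    then show ?thesis using assms(3)[OF \<open>x \<in> Q\<close>, of j] by simp
  qed
  have "v \<in> Q'" using imageI[OF assms(1), of "\<lambda>x j. x j + v j"] v by (simp add: translate_def)
  then have ge: "0 \<le> v j" for j using assms(4) by blast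
  have "v = (\<lambda>j. 0)" using le ge by (simp add: fun_eq_iff order_antisym)
  then show ?thesis using v translate_0 by simp
qed



lemma Dat_elim:
  assumes "pss \<in> Dat d" "d \<ge> 2"
  obtains k where "k \<ge> 1" "pss \<in> Lists (d - 1) (Prof k)" "length (hd pss) = k"
    "valid d k (LOp pss) (HIp pss)" "Psi d pss = Phi d k (LOp pss) (HIp pss)"
  using assms pss_basic unfolding Dat_def by blast

lemma dpp_count_eq:
  assumes d: "d \<ge> 2"
  shows "dpp_count d n = card {pss\<in>Dat d. wl wp pss = n}"
proof -
  define S where "S = {P. directed_plateau d P \<and> lateral_area d P = n}"
  define D where "D = {pss\<in>Dat d. wl wp pss = n}"
  have d1: "d \<ge> 1" using d by simp
  have PsiS: "Psi d pss \<in> S" if pD0: "pss \<in> D" for pss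
  proof -
    obtain k where k: "k \<ge> 1" "pss \<in> Lists (d - 1) (Prof k)" "valid d k (LOp pss) (HIp pss)"
      "Psi d pss = Phi d k (LOp pss) (HIp pss)"
      using pD0 d by (auto simp: D_def elim: Dat_elim)
    have "directed_plateau d (Psi d pss)" using Phi_dp[OF k(3) k(1) d1] k(4) by simp
    moreover have "lateral_area d (Psi d pss) = n" using pss_area[OF d k(1) k(2)] pD0 by (simp add: D_def)
    ultimately show ?thesis by (simp add: S_def)
  qed
  have canon: "(\<lambda>j. 0) \<in> Psi d pss \<and> (\<forall>x\<in>Psi d pss. \<forall>j. 0 \<le> x j)" if pD0: "pss \<in> D" for pss
  proof -
    obtain k where k: "k \<ge> 1" "valid d k (LOp pss) (HIp pss)" "Psi d pss = Phi d k (LOp pss) (HIp pss)"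
      using pD0 d by (auto simp: D_def elim: Dat_elim)
    show ?thesis using zero_in[OF k(2) k(1) d1] Phi_nonneg[OF k(2) k(1) d1] k(3) by simp
  qed
  have 1: "trans_class d ` S = trans_class d ` (Psi d ` D)"
  proof
    show "trans_class d ` S \<subseteq> trans_class d ` (Psi d ` D)"
    proof
      fix Z assume "Z \<in> trans_class d ` S"
      then obtain P where P: "P \<in> S" "Z = trans_class d P" by blast
      then have dp: "directed_plateau d P" and ar: "lateral_area d P = n" by (auto simp: S_def)
      obtain k LO HI r where kk: "k \<ge> 1" "valid d k LO HI" "r \<in> cells d" "P = translate r (Phi d k LO HI)"
        using dp_decomp[OF dp d1] by blast
      define pss where "pss = map (\<lambda>l. map (\<lambda>c. (LO c l, HI c l)) [0..<k]) [1..<d]"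
      have bp: "pss \<in> Lists (d - 1) (Prof k)"
        "\<forall>c<k. \<forall>l. 1 \<le> l \<and> l < d \<longrightarrow> LOp pss c l = LO c l \<and> HIp pss c l = HI c l"
        using build_pss[OF d kk(1) kk(2)] by (simp_all add: pss_def)
      have "Psi d pss = Phi d k (LOp pss) (HIp pss)" using pss_basic[OF d kk(1) bp(1)] by simp
      also have "\<dots> = Phi d k LO HI" by (rule Phi_cong) (use bp(2) in auto)
      finally have ps: "Psi d pss = Phi d k LO HI" .
      have "wl wp pss = n"
        using pss_area[OF d kk(1) bp(1)] ps ar kk(4) translate_area by metis
      then have "pss \<in> D" using bp(1) kk(1) by (auto simp: D_def Dat_def)
      moreover have "Z = trans_class d (Psi d pss)"
        using P(2) kk(3,4) ps trans_class_translate by metis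
      ultimately show "Z \<in> trans_class d ` (Psi d ` D)" by blast
    qed
  next
    show "trans_class d ` (Psi d ` D) \<subseteq> trans_class d ` S" using PsiS by blast
  qed
  have 2: "inj_on (trans_class d) (Psi d ` D)"
  proof (rule inj_onI)
    fix Q Q' assume "Q \<in> Psi d ` D" "Q' \<in> Psi d ` D" "trans_class d Q = trans_class d Q'"
    then show "Q = Q'" using canon trans_class_inj by (smt (verit, best) imageE)
  qed
  have 3: "inj_on (Psi d) D"
  proof (rule inj_onI)
    fix p p' assume pD: "p \<in> D" and p'D: "p' \<in> D" and eq: "Psi d p = Psi d p'"
    obtain k where k: "k \<ge> 1" "p \<in> Lists (d - 1) (Prof k)" "valid d k (LOp p) (HIp p)"
      "Psi d p = Phi d k (LOp p) (HIp p)"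
      using pD d by (auto simp: D_def elim: Dat_elim)
    obtain k' where k': "k' \<ge> 1" "p' \<in> Lists (d - 1) (Prof k')" "valid d k' (LOp p') (HIp p')"
      "Psi d p' = Phi d k' (LOp p') (HIp p')"
      using p'D d by (auto simp: D_def elim: Dat_elim)
    have inj: "k = k' \<and> (\<forall>c<k. \<forall>l. 1 \<le> l \<and> l < d \<longrightarrow> LOp p c l = LOp p' c l \<and> HIp p c l = HIp p' c l)"
      using Phi_inj[OF k(3) k'(3) k(1) k'(1) d1] eq k(4) k'(4) by simp
    have lp: "length p = d - 1" "length p' = d - 1" using k(2) k'(2) by (auto simp: Lists_def)
    have li: "length (p ! i) = k" "length (p' ! i) = k" if "i < d - 1" for i
    proof -
      have "p ! i \<in> set p" "p' ! i \<in> set p'" using that lp by simp_all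
      then show "length (p ! i) = k" "length (p' ! i) = k"
        using k(2) k'(2) inj by (auto simp: Lists_def Prof_def)
    qed
    show "p = p'"
    proof (rule nth_equalityI)
      show "length p = length p'" using lp by simp
    next
      fix i assume i: "i < length p"
      show "p ! i = p' ! i"
      proof (rule nth_equalityI)
        show "length (p ! i) = length (p' ! i)" using li i lp by simp
      next
        fix c assume c: "c < length (p ! i)"
        have "LOp p c (Suc i) = LOp p' c (Suc i) \<and> HIp p c (Suc i) = HIp p' c (Suc i)"
          using inj c li[of i] i lp by simp
        then show "p ! i ! c = p' ! i ! c" by (simp add: LOp_def HIp_def prod_eq_iff)
      qed
    qed
  qed
  have "dpp_count d n = card (trans_class d ` S)" by (simp add: dpp_count_def S_def)
  also have "\<dots> = card (Psi d ` D)" unfolding 1 by (rule card_image[OF 2])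
  also have "\<dots> = card D" by (rule card_image[OF 3])
  finally show ?thesis by (simp add: D_def)
qed



theorem theorem4:
  fixes d :: nat
  assumes "d \<ge> 3"
  shows "Abs_fps (\<lambda>n. of_nat (dpp_count d n) :: rat) =
    fps_X ^ (d - 1) * (1 - fps_X) ^ (d - 1) / ((1 - fps_X) ^ (2 * (d - 1)) - fps_X ^ (d - 1))"
proof -
  define m where "m = d - 1"
  have d2: "d \<ge> 2" and m1: "m \<ge> 1" using assms by (auto simp: m_def)
  define F where "F j = gf (Lists m (Prof j)) (wl wp)" for j
  have ffL: "ffib (Lists m (Prof (Suc j))) (wl wp)" for j
    using gf_Lists[of "Prof (Suc j)" wp m] gf_Prof[of j] by blast
  have FA: "F (Suc j) = g1 ^ m * (gP ^ m) ^ j" for j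
  proof -
    have "F (Suc j) = (g1 * gP ^ j) ^ m"
      using gf_Lists[of "Prof (Suc j)" wp m] gf_Prof[of j] by (simp add: F_def)
    also have "\<dots> = g1 ^ m * (gP ^ m) ^ j"
      by (simp add: power_mult_distrib power_mult[symmetric] mult.commute)
    finally show ?thesis .
  qed
  have Aeq: "g1 ^ m * (1 - fps_X) ^ m = fps_X ^ m"
    by (simp add: power_mult_distrib[symmetric] g1_eq)
  have Beq: "gP ^ m * (1 - fps_X) ^ (2 * m) = fps_X ^ m"
  proof -
    have "gP * (1 - fps_X) ^ 2 = fps_X"
      by (simp add: power2_eq_square mult.assoc[symmetric] gP_eq g1_eq)
    then have "(gP * (1 - fps_X) ^ 2) ^ m = fps_X ^ m" by simp
    moreover have "(1 - fps_X :: rat fps) ^ (2 * m) = ((1 - fps_X) ^ 2) ^ m"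
      by (simp add: power_mult)
    ultimately show ?thesis by (simp only: power_mult_distrib)
  qed
  have wlge: "length (hd pss) \<le> wl wp pss" if "pss \<in> Lists m (Prof k)" for pss k
  proof -
    have ne: "pss \<noteq> []" using that m1 by (auto simp: Lists_def)
    then have "hd pss \<in> set pss" by simp
    then have h: "hd pss \<in> Prof k" using that by (auto simp: Lists_def)
    have "wp (hd pss) \<in> set (map wp pss)" using \<open>hd pss \<in> set pss\<close> by simp
    then have "wp (hd pss) \<le> wl wp pss" unfolding wl_def by (rule member_le_sum_list) simp_all
    moreover have "length (hd pss) \<le> wp (hd pss)" using h wp_ge_length unfolding Prof_def by blast
    ultimately show ?thesis by simp
  qed
  have hdlen: "length (hd pss) = k" if "pss \<in> Lists m (Prof k)" for pss k
  proof -
    have ne: "pss \<noteq> []" using that m1 by (auto simp: Lists_def)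
    then have "hd pss \<in> set pss" by simp
    then show ?thesis using that by (auto simp: Lists_def Prof_def)
  qed
  have F0: "F (Suc j) $ i = 0" if "i \<le> j" for i j
  proof -
    have "{pss \<in> Lists m (Prof (Suc j)). wl wp pss = i} = {}"
      using wlge[of _ "Suc j"] hdlen[of _ "Suc j"] that by fastforce
    then have "cnt (Lists m (Prof (Suc j))) (wl wp) i = 0" unfolding cnt_def by (simp only: card.empty)
    then show ?thesis by (simp add: F_def gf_nth)
  qed
  have cardD: "card {pss\<in>Dat d. wl wp pss = n} = (\<Sum>j<n. cnt (Lists m (Prof (Suc j))) (wl wp) n)" for n
  proof -
    have "{pss\<in>Dat d. wl wp pss = n} = (\<Union>j<n. {pss \<in> Lists m (Prof (Suc j)). wl wp pss = n})"
    proof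
      show "{pss\<in>Dat d. wl wp pss = n} \<subseteq> (\<Union>j<n. {pss \<in> Lists m (Prof (Suc j)). wl wp pss = n})"
      proof
        fix pss assume "pss \<in> {pss\<in>Dat d. wl wp pss = n}"
        then obtain k where k: "k \<ge> 1" "pss \<in> Lists m (Prof k)" "wl wp pss = n"
          by (auto simp: Dat_def m_def)
        then have "k \<le> n" using wlge hdlen by fastforce
        then have "k - 1 < n" "Suc (k - 1) = k" using k(1) by auto
        then show "pss \<in> (\<Union>j<n. {pss \<in> Lists m (Prof (Suc j)). wl wp pss = n})"
          using k by (metis (mono_tags, lifting) UN_I lessThan_iff mem_Collect_eq)
      qed
    next
      show "(\<Union>j<n. {pss \<in> Lists m (Prof (Suc j)). wl wp pss = n}) \<subseteq> {pss\<in>Dat d. wl wp pss = n}"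
        by (auto simp: Dat_def m_def)
    qed
    moreover have "card (\<Union>j<n. {pss \<in> Lists m (Prof (Suc j)). wl wp pss = n}) =
        (\<Sum>j<n. card {pss \<in> Lists m (Prof (Suc j)). wl wp pss = n})"
    proof (rule card_UN_disjoint)
      show "finite {..<n}" by simp
      show "\<forall>j\<in>{..<n}. finite {pss \<in> Lists m (Prof (Suc j)). wl wp pss = n}"
        using ffL by (simp add: ffib_def)
      show "\<forall>i\<in>{..<n}. \<forall>j\<in>{..<n}. i \<noteq> j \<longrightarrow>
          {pss \<in> Lists m (Prof (Suc i)). wl wp pss = n} \<inter> {pss \<in> Lists m (Prof (Suc j)). wl wp pss = n} = {}"
        using hdlen by (metis (no_types, lifting) disjoint_iff mem_Collect_eq nat.inject)
    qed
    ultimately show ?thesis by (simp add: cnt_def)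
  qed
  define T where "T = Abs_fps (\<lambda>n. \<Sum>j<n. F (Suc j) $ n)"
  have "Abs_fps (\<lambda>n. of_nat (dpp_count d n) :: rat) = T"
    unfolding T_def
    by (rule fps_ext) (simp add: dpp_count_eq[OF d2] cardD F_def gf_nth)
  also have "T = fps_X ^ m * (1 - fps_X) ^ m / ((1 - fps_X) ^ (2 * m) - fps_X ^ m)"
    by (rule fps_final[OF m1 FA Aeq Beq F0 T_def])
  finally show ?thesis by (simp add: m_def)
qed


end
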